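(* For $0<p<1$ and $0<\varepsilon<1$, $$\frac{1}{1+\frac{1}{p\log(1/\varepsilon)}}\le\min\Big\{1-\varepsilon,\;p\log\frac1\varepsilon\Big\}\le\frac{2}{1+\frac{1}{p\log(1/\varepsilon)}}.$$
   Context: $\log$ is the natural logarithm. *)

theory Defs
  imports Complex_Main
begin

end

theory Submission
  imports Defs
begin

theorem lemma2:
  fixes p \<epsilon> :: real
  assumes "0 < p" "p < 1" "0 < \<epsilon>" "\<epsilon> < 1"
  shows "1 / (1 + 1 / (p * ln (1 / \<epsilon>))) \<le> min (1 - \<epsilon>) (p * ln (1 / \<epsilon>))
     \<and> min (1 - \<epsilon>) (p * ln (1 / \<epsilon>)) \<le> 2 / (1 + 1 / (p * ln (1 / \<epsilon>)))"
proof -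
  define L where "L = ln (1 / \<epsilon>)"
  define x where "x = p * L"
  have L0: "L > 0" unfolding L_def using assms by simp
  have x0: "x > 0" unfolding x_def using L0 assms by simp
  have xL: "x < L" unfolding x_def using L0 assms by simp
  have lnb: "L \<le> 1/\<epsilon> - 1" unfolding L_def using ln_le_minus_one[of "1/\<epsilon>"] assms by simp
  have e: "1 / (1 + 1 / x) = x / (1 + x)" using x0 by (simp add: field_simps)
  have e2: "2 / (1 + 1 / x) = 2 * x / (1 + x)" using x0 by (simp add: field_simps)
  have a: "x / (1 + x) \<le> x" using x0 by (simp add: field_simps)
  have b: "x / (1 + x) \<le> 1 - \<epsilon>"
  proof -
    have "\<epsilon> * (1 + x) \<le> \<epsilon> * (1 + L)" using xL assms by simp
    also have "\<dots> \<le> 1" using lnb assms by (simp add: field_simps)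
    finally have "\<epsilon> * (1 + x) \<le> 1" .
    then show ?thesis using x0 by (simp add: field_simps)
  qed
  have c: "min (1 - \<epsilon>) x \<le> 2 * x / (1 + x)"
  proof (cases "x \<le> 1")
    case True
    then have "x \<le> 2 * x / (1 + x)" using x0 by (simp add: field_simps)
    then show ?thesis by linarith
  next
    case False
    then have "1 \<le> 2 * x / (1 + x)" by (simp add: field_simps)
    then show ?thesis using assms by linarith
  qed
  show ?thesis using a b c e e2 unfolding x_def[symmetric] L_def[symmetric] by simp
qed

end
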